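(* Let $\mathcal{X}$ be a triangulation of $(S,\overline{M_n})$ and let $\mathcal{Y}$ be the mutation of $\mathcal{X}$ at an arc $X\in\mathcal{X}$, i.e. $\mathcal{Y}$ is a triangulation with $\mathcal{Y}=(\mathcal{X}\setminus\{X\})\cup\{Y\}$ for a unique arc $Y\neq X$. If $\mathcal{X}$ is rigid then $\mathcal{Y}$ is rigid; and if $\mathcal{X}$ is a fan triangulation then $\mathcal{Y}$ is a fan triangulation.
   Context: $\overline{\mathcal{C}_n}$ is the completed discrete cluster category of Dynkin type $\mathbb{A}$ (Paquette–Yıldırım) with geometric model $(S,\overline{M_n})$: $S$ a disc, $M_n$ an infinite discrete set of marked points on $\partial S$ with $n\ge1$ two-sided accumulation points, $\overline{M_n}$ = $M_n$ with the accumulation points added. It is a triangulated category with suspension $\Sigma$ whose indecomposables correspond to arcs between non-neighbouring points of $\overline{M_n}$; for indecomposables $A,C$, $\overline{\mathcal{C}_n}(C,\Sigma A)\ne0$ exactly if (i) $A,C$ cross transversely, or (ii) $A\ne C$ share exactly one accumulation point $p$ and the other endpoint of $C$ moves anticlockwise to the other endpoint of $A$ without passing $p$, or (iii) $A=C$ with both endpoints accumulation points. A set of arcs is identified with the additive subcategory it generates; it is rigid if $\overline{\mathcal{C}_n}(\mathcal{X},\Sigma\mathcal{X})=0$. A triangulation is a maximal set of pairwise non-transversely-crossing arcs; an infinite leapfrog is two sets of arcs $\{A_i\}_{i\in I}$, $\{B_i\}_{i\in I}$, $I\in\{\mathbb{Z},\mathbb{Z}_{\le0},\mathbb{Z}_{\ge0}\}$,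 all distinct and pairwise non-crossing, each $A_i$ incident with an endpoint of $B_i$ and (if $i-1\in I$) of $B_{i-1}$, each $B_i$ incident with an endpoint of $A_i$ and (if $i+1\in I$) of $A_{i+1}$, with a curve in $S$ crossing all of them; a fan triangulation is a triangulation with no infinite leapfrog. *)

theory Defs
  imports "HOL-Analysis.Analysis"
begin

text \<open>S is the closed unit disc in the complex plane.  The set of marked
points with the accumulation points added is modelled by the datatype below:
Acc k (k < n) is the k-th accumulation point, and Pt k z (k < n, z an integer)
are the marked points strictly between Acc k and Acc (k+1 mod n), ordered
anticlockwise by z.  They are placed on the unit circle at explicit angles;
anticlockwise means increasing angle.\<close>

datatype mpt = Acc nat | Pt nat int

definition frac_pos :: "int \<Rightarrow> real" where
  "frac_pos z = 1/2 + real_of_int z / (2 * (1 + \<bar>real_of_int z\<bar>))"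

fun ang :: "nat \<Rightarrow> mpt \<Rightarrow> real" where
  "ang n (Acc k) = 2 * pi * real k / real n"
| "ang n (Pt k z) = 2 * pi * (real k + frac_pos z) / real n"

definition pos :: "nat \<Rightarrow> mpt \<Rightarrow> complex" where
  "pos n p = cis (ang n p)"

fun valid_pt :: "nat \<Rightarrow> mpt \<Rightarrow> bool" where
  "valid_pt n (Acc k) = (k < n)"
| "valid_pt n (Pt k z) = (k < n)"

fun is_acc :: "mpt \<Rightarrow> bool" where
  "is_acc (Acc k) = True"
| "is_acc (Pt k z) = False"

definition neighbours :: "mpt \<Rightarrow> mpt \<Rightarrow> bool" where
  "neighbours p q = (\<exists>k z. (p = Pt k z \<and> q = Pt k (z+1)) \<or> (q = Pt k z \<and> p = Pt k (z+1)))"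

text \<open>cyc n x y z: moving anticlockwise from x one meets y strictly before z.\<close>
definition cyc :: "nat \<Rightarrow> mpt \<Rightarrow> mpt \<Rightarrow> mpt \<Rightarrow> bool" where
  "cyc n x y z = (let a = ang n x; b = ang n y; c = ang n z in
      (a < b \<and> b < c) \<or> (b < c \<and> c < a) \<or> (c < a \<and> a < b))"

text \<open>An arc (up to isotopy) is determined by its unordered pair of endpoints.\<close>
definition is_arc :: "nat \<Rightarrow> mpt set \<Rightarrow> bool" where
  "is_arc n \<alpha> = (\<exists>a b. \<alpha> = {a, b} \<and> a \<noteq> b \<and> valid_pt n a \<and> valid_pt n b
                       \<and> \<not> neighbours a b)"

definition crosses :: "nat \<Rightarrow> mpt set \<Rightarrow> mpt set \<Rightarrow> bool" where
  "crosses n \<alpha> \<beta> = (\<exists>a b c d. \<alpha> = {a, b} \<and> \<beta> = {c, d} \<and> a \<noteq> b \<and> c \<noteq> d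
        \<and> \<alpha> \<inter> \<beta> = {} \<and> (cyc n a c b \<noteq> cyc n a d b))"

text \<open>ext n C A holds iff the space of morphisms C \<rightarrow> \<Sigma> A is nonzero.\<close>
definition ext :: "nat \<Rightarrow> mpt set \<Rightarrow> mpt set \<Rightarrow> bool" where
  "ext n C A =
     (crosses n A C
      \<or> (A \<noteq> C \<and> (\<exists>p c a. A \<inter> C = {p} \<and> is_acc p \<and> C = {p, c} \<and> A = {p, a}
                          \<and> cyc n c a p))
      \<or> (A = C \<and> (\<forall>x\<in>A. is_acc x)))"

definition rigid :: "nat \<Rightarrow> mpt set set \<Rightarrow> bool" where
  "rigid n \<X> = (\<forall>A\<in>\<X>. \<forall>C\<in>\<X>. \<not> ext n C A)"

definition noncrossing :: "nat \<Rightarrow> mpt set set \<Rightarrow> bool" where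
  "noncrossing n \<X> = (\<forall>\<alpha>\<in>\<X>. \<forall>\<beta>\<in>\<X>. \<not> crosses n \<alpha> \<beta>)"

definition triangulation :: "nat \<Rightarrow> mpt set set \<Rightarrow> bool" where
  "triangulation n \<X> = ((\<forall>\<alpha>\<in>\<X>. is_arc n \<alpha>) \<and> noncrossing n \<X>
      \<and> (\<forall>\<alpha>. is_arc n \<alpha> \<and> \<alpha> \<notin> \<X> \<longrightarrow> (\<exists>\<beta>\<in>\<X>. crosses n \<alpha> \<beta>)))"

text \<open>Signed side of the point x with respect to the straight chord through
u and v (positive: to the left of u \<rightarrow> v).\<close>
definition side :: "complex \<Rightarrow> complex \<Rightarrow> complex \<Rightarrow> real" where
  "side u v x = Im (cnj (v - u) * (x - u))"

text \<open>A curve \<gamma> in S crosses the arc {a,b} (realised as a chord) if its start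
and end point lie strictly on opposite sides of the arc.\<close>
definition curve_crosses :: "nat \<Rightarrow> (real \<Rightarrow> complex) \<Rightarrow> mpt set \<Rightarrow> bool" where
  "curve_crosses n \<gamma> \<alpha> = (\<exists>a b. \<alpha> = {a, b} \<and>
      side (pos n a) (pos n b) (pathstart \<gamma>) * side (pos n a) (pos n b) (pathfinish \<gamma>) < 0)"

definition leapfrog :: "nat \<Rightarrow> (int \<Rightarrow> mpt set) \<Rightarrow> (int \<Rightarrow> mpt set) \<Rightarrow> int set \<Rightarrow> bool" where
  "leapfrog n A B I =
    (I \<in> {UNIV, {..0}, {0..}}
     \<and> (\<forall>i\<in>I. is_arc n (A i) \<and> is_arc n (B i))
     \<and> inj_on A I \<and> inj_on B I \<and> A ` I \<inter> B ` I = {}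
     \<and> noncrossing n (A ` I \<union> B ` I)
     \<and> (\<forall>i\<in>I. A i \<inter> B i \<noteq> {})
     \<and> (\<forall>i\<in>I. i - 1 \<in> I \<longrightarrow> A i \<inter> B (i - 1) \<noteq> {} \<and> A i \<inter> B (i - 1) \<noteq> A i \<inter> B i)
     \<and> (\<forall>i\<in>I. i + 1 \<in> I \<longrightarrow> B i \<inter> A (i + 1) \<noteq> {} \<and> B i \<inter> A (i + 1) \<noteq> B i \<inter> A i)
     \<and> (\<exists>\<gamma>. path \<gamma> \<and> path_image \<gamma> \<subseteq> cball 0 1
            \<and> (\<forall>i\<in>I. curve_crosses n \<gamma> (A i) \<and> curve_crosses n \<gamma> (B i))))"

definition fan_triangulation :: "nat \<Rightarrow> mpt set set \<Rightarrow> bool" where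
  "fan_triangulation n \<X> = (triangulation n \<X> \<and>
      \<not> (\<exists>A B I. leapfrog n A B I \<and> A ` I \<union> B ` I \<subseteq> \<X>))"

end

theory Submission imports Defs begin

definition cycr :: "real \<Rightarrow> real \<Rightarrow> real \<Rightarrow> bool" where
  "cycr a b c = ((a<b \<and> b<c) \<or> (b<c \<and> c<a) \<or> (c<a \<and> a<b))"

lemma key_raw:
  fixes p q x1 x2 u v :: real
  assumes "distinct [p,q,x1,x2]" "((p<x1 \<and> x1<q) \<or> (x1<q \<and> q<p) \<or> (q<p \<and> p<x1)) \<noteq> ((p<x2 \<and> x2<q) \<or> (x2<q \<and> q<p) \<or> (q<p \<and> p<x2))"
    "u \<noteq> v" "u \<notin> {p,x1}" "v \<notin> {p,x1}" "((p<u \<and> u<x1) \<or> (u<x1 \<and> x1<p) \<or> (x1<p \<and> p<u)) \<noteq> ((p<v \<and> v<x1) \<or> (v<x1 \<and> x1<p) \<or> (x1<p \<and> p<v))"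
  shows "(u \<notin> {x1,x2} \<and> v \<notin> {x1,x2} \<and> ((x1<u \<and> u<x2) \<or> (u<x2 \<and> x2<x1) \<or> (x2<x1 \<and> x1<u)) \<noteq> ((x1<v \<and> v<x2) \<or> (v<x2 \<and> x2<x1) \<or> (x2<x1 \<and> x1<v)))
       \<or> (u \<notin> {p,q} \<and> v \<notin> {p,q} \<and> ((p<u \<and> u<q) \<or> (u<q \<and> q<p) \<or> (q<p \<and> p<u)) \<noteq> ((p<v \<and> v<q) \<or> (v<q \<and> q<p) \<or> (q<p \<and> p<v)))"
  using assms unfolding distinct.simps list.set insert_iff empty_iff by (smt (z3))

lemma key_real:
  fixes p q x1 x2 u v :: real
  assumes "distinct [p,q,x1,x2]" "cycr p x1 q \<noteq> cycr p x2 q"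
    "u \<noteq> v" "u \<notin> {p,x1}" "v \<notin> {p,x1}" "cycr p u x1 \<noteq> cycr p v x1"
  shows "(u \<notin> {x1,x2} \<and> v \<notin> {x1,x2} \<and> cycr x1 u x2 \<noteq> cycr x1 v x2)
       \<or> (u \<notin> {p,q} \<and> v \<notin> {p,q} \<and> cycr p u q \<noteq> cycr p v q)"
  using key_raw[OF assms[unfolded cycr_def]] unfolding cycr_def .

lemma fe: "frac_pos t = 1/2 + (real_of_int t/(1+\<bar>real_of_int t\<bar>))/2"
  by (simp add: frac_pos_def)

lemma gbound: "\<bar>(x::real)/(1+\<bar>x\<bar>)\<bar> < 1"
proof -
  have p: "0 < 1 + \<bar>x\<bar>" by (simp add: add_pos_nonneg)
  have "\<bar>x/(1+\<bar>x\<bar>)\<bar> = \<bar>x\<bar>/(1+\<bar>x\<bar>)" using p by (simp add: abs_divide)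
  also have "\<dots> < 1" using p by (simp add: divide_less_eq)
  finally show ?thesis .
qed

lemma frac_bounds: "0 < frac_pos z \<and> frac_pos z < 1"
proof -
  define g where "g = real_of_int z/(1+\<bar>real_of_int z\<bar>)"
  have "\<bar>g\<bar> < 1" using gbound g_def by simp
  moreover have "frac_pos z = 1/2 + g/2" using fe g_def by simp
  ultimately show ?thesis by (simp add: abs_less_iff)
qed

lemma g_mono: assumes "(a::real) < b" shows "a/(1+\<bar>a\<bar>) < b/(1+\<bar>b\<bar>)"
proof -
  have "a*(1+\<bar>b\<bar>) < b*(1+\<bar>a\<bar>)"
  proof (cases "a \<ge> 0")
    case True thus ?thesis using assms by (simp add: algebra_simps)
  next
    case False
    show ?thesis
    proof (cases "b \<ge> 0")
      case True
      have "a*(1+\<bar>b\<bar>) < 0" using False by (simp add: mult_neg_pos add_pos_nonneg)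
      moreover have "b*(1+\<bar>a\<bar>) \<ge> 0" using True by simp
      ultimately show ?thesis by linarith
    next
      case F2: False
      thus ?thesis using False assms by (simp add: algebra_simps)
    qed
  qed
  thus ?thesis by (simp add: field_simps add_pos_nonneg)
qed

lemma frac_inj: assumes "frac_pos z = frac_pos w" shows "z = w"
proof (rule ccontr)
  assume "z \<noteq> w"
  hence "real_of_int z < real_of_int w \<or> real_of_int w < real_of_int z" by linarith
  moreover have fe: "\<And>t. frac_pos t = 1/2 + (real_of_int t/(1+\<bar>real_of_int t\<bar>))/2"
    by (simp add: frac_pos_def)
  ultimately show False using assms g_mono fe by (metis less_irrefl add_less_cancel_left divide_strict_right_mono zero_less_numeral)
qed

lemma ang_inj:
  assumes "n \<ge> 1" "valid_pt n p" "valid_pt n q" "ang n p = ang n q"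
  shows "p = q"
proof -
  have np: "real n > 0" using assms(1) by simp
  have key: "\<And>k l f. (k::nat) = real l + f \<Longrightarrow> 0 < f \<Longrightarrow> f < 1 \<Longrightarrow> False"
  proof -
    fix k l :: nat and f :: real assume h: "real k = real l + f" "0 < f" "f < 1"
    hence "l < k" "k < l + 1" by linarith+
    thus False by simp
  qed
  show ?thesis
  proof (cases p)
    case (Acc k) note pk = this
    show ?thesis
    proof (cases q)
      case (Acc l)
      have "2*pi*real k / real n = 2*pi*real l/real n" using assms pk Acc by simp
      hence "2*pi*real k = 2*pi*real l" using np by (simp add: field_simps)
      hence "real k = real l" using pi_gt_zero by simp
      thus ?thesis using pk Acc by simp
    next
      case (Pt l w)
      have "2*pi*real k / real n = 2*pi*(real l + frac_pos w)/real n" using assms pk Pt by simp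
      hence "2*pi*real k = 2*pi*(real l + frac_pos w)" using np by (simp add: field_simps)
      hence "real k = real l + frac_pos w" using pi_gt_zero by simp
      thus ?thesis using key frac_bounds by blast
    qed
  next
    case (Pt k z) note pk = this
    show ?thesis
    proof (cases q)
      case (Acc l)
      have "2*pi*real l / real n = 2*pi*(real k + frac_pos z)/real n" using assms pk Acc by simp
      hence "2*pi*real l = 2*pi*(real k + frac_pos z)" using np by (simp add: field_simps)
      hence "real l = real k + frac_pos z" using pi_gt_zero by simp
      thus ?thesis using key frac_bounds by blast
    next
      case (Pt l w)
      have "2*pi*(real l + frac_pos w) / real n = 2*pi*(real k + frac_pos z)/real n" using assms pk Pt by simp
      hence "2*pi*(real l + frac_pos w) = 2*pi*(real k + frac_pos z)" using np by (simp add: field_simps)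
      hence e: "real l + frac_pos w = real k + frac_pos z" using pi_gt_zero by simp
      have "k = l"
      proof (rule ccontr)
        assume "k \<noteq> l"
        hence "real k + 1 \<le> real l \<or> real l + 1 \<le> real k" by linarith
        thus False using e frac_bounds[of w] frac_bounds[of z] by linarith
      qed
      thus ?thesis using e frac_inj pk Pt by auto
    qed
  qed
qed


lemma cyc_eq: "cyc n x y z = cycr (ang n x) (ang n y) (ang n z)"
  by (simp add: cyc_def cycr_def Let_def)

lemma ang_neq: "n \<ge> 1 \<Longrightarrow> valid_pt n p \<Longrightarrow> valid_pt n q \<Longrightarrow> p \<noteq> q \<Longrightarrow> ang n p \<noteq> ang n q"
  using ang_inj by blast

lemma cycr_swap: "distinct [A,B,C] \<Longrightarrow> cycr B C A = (\<not> cycr A C (B::real))"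
  unfolding cycr_def by auto

lemma crosses_imp:
  assumes "crosses n {a,b} {c,d}" "n \<ge> 1" "valid_pt n a" "valid_pt n b" "valid_pt n c" "valid_pt n d"
  shows "a \<noteq> b \<and> c \<noteq> d \<and> c \<notin> {a,b} \<and> d \<notin> {a,b} \<and>
         cycr (ang n a) (ang n c) (ang n b) \<noteq> cycr (ang n a) (ang n d) (ang n b)"
proof -
  obtain a' b' c' d' where h: "{a,b} = {a',b'}" "{c,d} = {c',d'}" "a' \<noteq> b'" "c' \<noteq> d'"
     "{a,b} \<inter> {c,d} = {}" "cyc n a' c' b' \<noteq> cyc n a' d' b'"
    using assms(1) unfolding crosses_def by blast
  have ab: "(a'=a \<and> b'=b) \<or> (a'=b \<and> b'=a)" using h(1) by (auto simp: doubleton_eq_iff)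
  have cd: "(c'=c \<and> d'=d) \<or> (c'=d \<and> d'=c)" using h(2) by (auto simp: doubleton_eq_iff)
  have d1: "a \<noteq> b" "c \<noteq> d" "c \<noteq> a" "c \<noteq> b" "d \<noteq> a" "d \<noteq> b" using h(3,4,5) ab cd by blast+
  have e1: "ang n a \<noteq> ang n b" by (rule ang_neq[OF assms(2)]) (use assms d1 in blast)+
  have e2: "ang n c \<noteq> ang n a" by (rule ang_neq[OF assms(2)]) (use assms d1 in blast)+
  have e3: "ang n c \<noteq> ang n b" by (rule ang_neq[OF assms(2)]) (use assms d1 in blast)+
  have e4: "ang n d \<noteq> ang n a" by (rule ang_neq[OF assms(2)]) (use assms d1 in blast)+
  have e5: "ang n d \<noteq> ang n b" by (rule ang_neq[OF assms(2)]) (use assms d1 in blast)+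
  have s1: "cycr (ang n b) (ang n c) (ang n a) = (\<not> cycr (ang n a) (ang n c) (ang n b))"
    by (rule cycr_swap) (use e1 e2 e3 in simp)
  have s2: "cycr (ang n b) (ang n d) (ang n a) = (\<not> cycr (ang n a) (ang n d) (ang n b))"
    by (rule cycr_swap) (use e1 e4 e5 in simp)
  have "cycr (ang n a') (ang n c') (ang n b') \<noteq> cycr (ang n a') (ang n d') (ang n b')"
    using h(6) unfolding cyc_eq .
  hence "cycr (ang n a) (ang n c) (ang n b) \<noteq> cycr (ang n a) (ang n d) (ang n b)"
    using ab cd s1 s2 by (elim disjE conjE; simp)
  thus ?thesis using d1 by blast
qed

lemma crosses_intro:
  assumes "a \<noteq> b" "c \<noteq> d" "c \<notin> {a,b}" "d \<notin> {a,b}"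
    "cycr (ang n a) (ang n c) (ang n b) \<noteq> cycr (ang n a) (ang n d) (ang n b)"
  shows "crosses n {a,b} {c,d}"
  unfolding crosses_def
  apply (rule exI[of _ a], rule exI[of _ b], rule exI[of _ c], rule exI[of _ d])
  using assms by (simp add: cyc_eq)

lemma arc_pts: "is_arc n \<alpha> \<Longrightarrow> \<exists>a b. \<alpha> = {a,b} \<and> a \<noteq> b \<and> valid_pt n a \<and> valid_pt n b"
  unfolding is_arc_def by blast



lemma side_in:
  assumes n: "n \<ge> 1" and tX: "triangulation n \<X>" and ncY: "noncrossing n \<Y>"
    and sub: "\<X> - {X} \<subseteq> \<Y>" and YY: "Y \<in> \<Y>" and XX: "X \<in> \<X>"
    and Xe: "X = {x1,x2}" and Ye: "Y = {p,q}" and acc: "is_acc p"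
    and v: "valid_pt n p" "valid_pt n q" "valid_pt n x1" "valid_pt n x2"
    and dist: "distinct [p,q,x1,x2]"
    and cr: "cycr (ang n p) (ang n x1) (ang n q) \<noteq> cycr (ang n p) (ang n x2) (ang n q)"
  shows "{p,x1} \<in> \<X>"
proof (rule ccontr)
  assume nin: "{p,x1} \<notin> \<X>"
  have arc: "is_arc n {p,x1}"
    unfolding is_arc_def neighbours_def using v dist acc
    by (intro exI[of _ p] exI[of _ x1]) (cases p; auto)
  obtain \<beta> where b: "\<beta> \<in> \<X>" "crosses n {p,x1} \<beta>" using tX nin arc unfolding triangulation_def by blast
  obtain u w where uw: "\<beta> = {u,w}" "u \<noteq> w" "valid_pt n u" "valid_pt n w"
    using arc_pts b(1) tX unfolding triangulation_def by blast
  have ci: "u \<notin> {p,x1} \<and> w \<notin> {p,x1} \<and> cycr (ang n p) (ang n u) (ang n x1) \<noteq> cycr (ang n p) (ang n w) (ang n x1)"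
    using crosses_imp[OF b(2)[unfolded uw(1)] n v(1) v(3) uw(3) uw(4)] by blast
  have dA: "distinct [ang n p, ang n q, ang n x1, ang n x2]" using dist v n ang_neq by auto
  have "ang n u \<noteq> ang n w" "ang n u \<notin> {ang n p, ang n x1}" "ang n w \<notin> {ang n p, ang n x1}"
    using ci uw v n ang_neq by auto
  from key_real[OF dA cr this(1-3)] ci
  have "(ang n u \<notin> {ang n x1, ang n x2} \<and> ang n w \<notin> {ang n x1, ang n x2} \<and> cycr (ang n x1) (ang n u) (ang n x2) \<noteq> cycr (ang n x1) (ang n w) (ang n x2))
       \<or> (ang n u \<notin> {ang n p, ang n q} \<and> ang n w \<notin> {ang n p, ang n q} \<and> cycr (ang n p) (ang n u) (ang n q) \<noteq> cycr (ang n p) (ang n w) (ang n q))"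
    by blast
  thus False
  proof
    assume h: "ang n u \<notin> {ang n x1, ang n x2} \<and> ang n w \<notin> {ang n x1, ang n x2} \<and> cycr (ang n x1) (ang n u) (ang n x2) \<noteq> cycr (ang n x1) (ang n w) (ang n x2)"
    have "crosses n {x1,x2} {u,w}" using h dist uw by (intro crosses_intro) auto
    thus False using tX XX b(1) Xe uw(1) unfolding triangulation_def noncrossing_def by blast
  next
    assume h: "ang n u \<notin> {ang n p, ang n q} \<and> ang n w \<notin> {ang n p, ang n q} \<and> cycr (ang n p) (ang n u) (ang n q) \<noteq> cycr (ang n p) (ang n w) (ang n q)"
    have c: "crosses n {p,q} {u,w}" using h dist uw by (intro crosses_intro) auto
    have "\<beta> \<noteq> X" using ci Xe uw(1) by auto
    hence "\<beta> \<in> \<Y>" using sub b(1) by blast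
    thus False using c ncY YY Ye uw(1) unfolding noncrossing_def by blast
  qed
qed

lemma no_acc:
  assumes n: "n \<ge> 1" and tX: "triangulation n \<X>" and XX: "X \<in> \<X>"
    and aY: "is_arc n Y" and YX: "Y \<noteq> X" and Ydef: "\<Y> = (\<X> - {X}) \<union> {Y}"
    and tY: "triangulation n \<Y>" and rig: "rigid n \<X>"
    and pY: "p \<in> Y" and acc: "is_acc p"
  shows False
proof -
  have ncX: "noncrossing n \<X>" and ncY: "noncrossing n \<Y>" using tX tY unfolding triangulation_def by auto
  have YnX: "Y \<notin> \<X>"
  proof
    assume "Y \<in> \<X>"
    hence "\<Y> = \<X> - {X}" using Ydef YX by auto
    moreover have "is_arc n X" using tX XX unfolding triangulation_def by blast
    ultimately obtain \<beta> where "\<beta> \<in> \<X> - {X}" "crosses n X \<beta>" using tY unfolding triangulation_def by blast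
    thus False using ncX XX unfolding noncrossing_def by blast
  qed
  obtain \<beta> where b: "\<beta> \<in> \<X>" "crosses n Y \<beta>" using tX YnX aY unfolding triangulation_def by blast
  have "\<beta> = X"
  proof (rule ccontr)
    assume "\<beta> \<noteq> X" hence "\<beta> \<in> \<Y>" using b Ydef by auto
    thus False using b ncY Ydef unfolding noncrossing_def by blast
  qed
  with b have cYX: "crosses n Y X" by simp
  obtain a b where ab: "Y = {a,b}" "a \<noteq> b" "valid_pt n a" "valid_pt n b" using arc_pts[OF aY] by blast
  obtain q where Ye: "Y = {p,q}" "valid_pt n p" "valid_pt n q" using ab pY by auto
  obtain x1 x2 where Xe: "X = {x1,x2}" "valid_pt n x1" "valid_pt n x2"
    using arc_pts tX XX unfolding triangulation_def by blast
  have ci: "p \<noteq> q \<and> x1 \<noteq> x2 \<and> x1 \<notin> {p,q} \<and> x2 \<notin> {p,q} \<and>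
      cycr (ang n p) (ang n x1) (ang n q) \<noteq> cycr (ang n p) (ang n x2) (ang n q)"
    using crosses_imp[OF cYX[unfolded Ye(1) Xe(1)] n Ye(2,3) Xe(2,3)] by blast
  have sub: "\<X> - {X} \<subseteq> \<Y>" and YY: "Y \<in> \<Y>" using Ydef by auto
  have i1: "{p,x1} \<in> \<X>"
    by (rule side_in[OF n tX ncY sub YY XX Xe(1) Ye(1) acc Ye(2,3) Xe(2,3)]) (use ci in auto)
  have i2: "{p,x2} \<in> \<X>"
    by (rule side_in[OF n tX ncY sub YY XX _ Ye(1) acc Ye(2,3) Xe(3,2)]) (use ci Xe in auto)
  have dA: "distinct [ang n x1, ang n x2, ang n p]" using ci ang_neq n Ye Xe by auto
  have ne: "{p,x1} \<noteq> {p,x2}" "{p,x1} \<inter> {p,x2} = {p}" using ci by (auto simp: doubleton_eq_iff)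
  have "cycr (ang n x1) (ang n x2) (ang n p) \<or> cycr (ang n x2) (ang n x1) (ang n p)"
    using dA unfolding cycr_def by auto
  thus False
  proof
    assume "cycr (ang n x1) (ang n x2) (ang n p)"
    hence "{p,x2} \<noteq> {p,x1} \<and> {p,x2} \<inter> {p,x1} = {p} \<and> is_acc p \<and> {p,x1} = {p,x1} \<and> {p,x2} = {p,x2} \<and> cyc n x1 x2 p"
      using ne acc by (auto simp: cyc_eq)
    hence "ext n {p,x1} {p,x2}" unfolding ext_def by (intro disjI2 disjI1) (elim conjE; intro conjI exI; assumption)
    thus False using rig i1 i2 unfolding rigid_def by blast
  next
    assume "cycr (ang n x2) (ang n x1) (ang n p)"
    hence "{p,x1} \<noteq> {p,x2} \<and> {p,x1} \<inter> {p,x2} = {p} \<and> is_acc p \<and> {p,x2} = {p,x2} \<and> {p,x1} = {p,x1} \<and> cyc n x2 x1 p"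
      using ne acc by (auto simp: cyc_eq)
    hence "ext n {p,x2} {p,x1}" unfolding ext_def by (intro disjI2 disjI1) (elim conjE; intro conjI exI; assumption)
    thus False using rig i1 i2 unfolding rigid_def by blast
  qed
qed

lemma noncrossing_mono: "noncrossing n S \<Longrightarrow> T \<subseteq> S \<Longrightarrow> noncrossing n T"
  unfolding noncrossing_def by blast

lemma leapfrog_shift:
  assumes lf: "leapfrog n A B I" and J: "J \<in> {UNIV, {..0}, {0..}}" and JI: "\<forall>i\<in>J. i + s \<in> I"
  shows "leapfrog n (\<lambda>i. A (i+s)) (\<lambda>i. B (i+s)) J"
proof -
  have L: "(\<forall>i\<in>I. is_arc n (A i) \<and> is_arc n (B i))"
     "inj_on A I" "inj_on B I" "A ` I \<inter> B ` I = {}"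
     "noncrossing n (A ` I \<union> B ` I)"
     "\<forall>i\<in>I. A i \<inter> B i \<noteq> {}"
     "\<forall>i\<in>I. i - 1 \<in> I \<longrightarrow> A i \<inter> B (i - 1) \<noteq> {} \<and> A i \<inter> B (i - 1) \<noteq> A i \<inter> B i"
     "\<forall>i\<in>I. i + 1 \<in> I \<longrightarrow> B i \<inter> A (i + 1) \<noteq> {} \<and> B i \<inter> A (i + 1) \<noteq> B i \<inter> A i"
    using lf unfolding leapfrog_def by blast+
  obtain \<gamma> where g: "path \<gamma>" "path_image \<gamma> \<subseteq> cball 0 1"
      "\<forall>i\<in>I. curve_crosses n \<gamma> (A i) \<and> curve_crosses n \<gamma> (B i)"
    using lf unfolding leapfrog_def by blast
  have sub: "(\<lambda>i. i + s) ` J \<subseteq> I" using JI by blast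
  have injs: "inj_on (\<lambda>i::int. i + s) J" by (simp add: inj_on_def)
  have iA: "inj_on (\<lambda>i. A (i+s)) J"
    using comp_inj_on[OF injs inj_on_subset[OF L(2) sub]] by (simp add: o_def)
  have iB: "inj_on (\<lambda>i. B (i+s)) J"
    using comp_inj_on[OF injs inj_on_subset[OF L(3) sub]] by (simp add: o_def)
  have imA: "(\<lambda>i. A (i+s)) ` J \<subseteq> A ` I" and imB: "(\<lambda>i. B (i+s)) ` J \<subseteq> B ` I" using JI by auto
  have dj: "(\<lambda>i. A (i+s)) ` J \<inter> (\<lambda>i. B (i+s)) ` J = {}" using imA imB L(4) by blast
  have nc: "noncrossing n ((\<lambda>i. A (i+s)) ` J \<union> (\<lambda>i. B (i+s)) ` J)"
    by (rule noncrossing_mono[OF L(5)]) (use imA imB in blast)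
  have e1: "\<And>i::int. i - 1 + s = i + s - 1" and e2: "\<And>i::int. i + 1 + s = i + s + 1" by simp_all
  have a6: "\<forall>i\<in>J. A (i+s) \<inter> B (i+s) \<noteq> {}" using JI L(6) by blast
  have a7: "\<forall>i\<in>J. i - 1 \<in> J \<longrightarrow> A (i+s) \<inter> B (i - 1 + s) \<noteq> {} \<and> A (i+s) \<inter> B (i - 1 + s) \<noteq> A (i+s) \<inter> B (i+s)"
  proof (intro ballI impI)
    fix i assume "i \<in> J" "i - 1 \<in> J"
    hence "i + s \<in> I" "i + s - 1 \<in> I" using JI e1 by metis+
    thus "A (i+s) \<inter> B (i - 1 + s) \<noteq> {} \<and> A (i+s) \<inter> B (i - 1 + s) \<noteq> A (i+s) \<inter> B (i+s)"
      using L(7) e1 by metis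
  qed
  have a8: "\<forall>i\<in>J. i + 1 \<in> J \<longrightarrow> B (i+s) \<inter> A (i + 1 + s) \<noteq> {} \<and> B (i+s) \<inter> A (i + 1 + s) \<noteq> B (i+s) \<inter> A (i+s)"
  proof (intro ballI impI)
    fix i assume "i \<in> J" "i + 1 \<in> J"
    hence "i + s \<in> I" "i + s + 1 \<in> I" using JI e2 by metis+
    thus "B (i+s) \<inter> A (i + 1 + s) \<noteq> {} \<and> B (i+s) \<inter> A (i + 1 + s) \<noteq> B (i+s) \<inter> A (i+s)"
      using L(8) e2 by metis
  qed
  have gJ: "\<forall>i\<in>J. curve_crosses n \<gamma> (A (i+s)) \<and> curve_crosses n \<gamma> (B (i+s))" using g(3) JI by blast
  have aJ: "\<forall>i\<in>J. is_arc n (A (i+s)) \<and> is_arc n (B (i+s))" using L(1) JI by blast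
  show ?thesis unfolding leapfrog_def
    using J aJ iA iB dj nc a6 a7 a8 g(1,2) gJ by blast
qed

theorem mainTheorem9:
  fixes n :: nat and \<X> \<Y> :: "mpt set set" and X Y :: "mpt set"
  assumes "n \<ge> 1"
    and "triangulation n \<X>"
    and "X \<in> \<X>"
    and "is_arc n Y" and "Y \<noteq> X"
    and "\<Y> = (\<X> - {X}) \<union> {Y}"
    and "triangulation n \<Y>"
    and "\<exists>!Y'. is_arc n Y' \<and> Y' \<noteq> X \<and> triangulation n ((\<X> - {X}) \<union> {Y'})"
  shows "(rigid n \<X> \<longrightarrow> rigid n \<Y>) \<and> (fan_triangulation n \<X> \<longrightarrow> fan_triangulation n \<Y>)"
proof (intro conjI impI)
  assume rig: "rigid n \<X>"
  have noacc: "\<And>p. p \<in> Y \<Longrightarrow> \<not> is_acc p"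
    using no_acc[OF assms(1-7) rig] by blast
  have ncY: "noncrossing n \<Y>" using assms(7) unfolding triangulation_def by blast
  have Yne: "Y \<noteq> {}" using assms(4) unfolding is_arc_def by blast
  show "rigid n \<Y>" unfolding rigid_def
  proof (intro ballI)
    fix A C assume A: "A \<in> \<Y>" and C: "C \<in> \<Y>"
    show "\<not> ext n C A"
    proof (cases "A \<in> \<X> - {X} \<and> C \<in> \<X> - {X}")
      case True thus ?thesis using rig unfolding rigid_def by blast
    next
      case False
      hence AY: "A = Y \<or> C = Y" using A C assms(6) by blast
      have "\<not> crosses n A C" using ncY A C unfolding noncrossing_def by blast
      moreover have "\<not> (\<exists>p c a. A \<inter> C = {p} \<and> is_acc p \<and> C = {p, c} \<and> A = {p, a} \<and> cyc n c a p)"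
        using AY noacc by blast
      moreover have "\<not> (A = C \<and> (\<forall>x\<in>A. is_acc x))"
        using AY noacc Yne by blast
      ultimately show ?thesis unfolding ext_def by blast
    qed
  qed
next
  assume fan: "fan_triangulation n \<X>"
  have subX: "\<Y> - {Y} \<subseteq> \<X>" using assms(6) by blast
  show "fan_triangulation n \<Y>" unfolding fan_triangulation_def
  proof (intro conjI notI)
    show "triangulation n \<Y>" by (rule assms(7))
  next
    assume "\<exists>A B I. leapfrog n A B I \<and> A ` I \<union> B ` I \<subseteq> \<Y>"
    then obtain A B I where lf: "leapfrog n A B I" and im: "A ` I \<union> B ` I \<subseteq> \<Y>" by blast
    have noX: "\<not> (\<exists>A B I. leapfrog n A B I \<and> A ` I \<union> B ` I \<subseteq> \<X>)"
      using fan unfolding fan_triangulation_def by blast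
    have I3: "I \<in> {UNIV, {..0}, {0..}}" and injA: "inj_on A I" and injB: "inj_on B I"
      and dAB: "A ` I \<inter> B ` I = {}"
      using lf unfolding leapfrog_def by blast+
    show False
    proof (cases "Y \<in> A ` I \<union> B ` I")
      case False
      hence "A ` I \<union> B ` I \<subseteq> \<X>" using im subX by blast
      thus False using noX lf by blast
    next
      case True
      then obtain i0 where i0: "i0 \<in> I" "Y = A i0 \<or> Y = B i0" by blast
      obtain J s where J: "J \<in> {UNIV, {..0}, {0..}}" and JI: "\<forall>i\<in>J. i + s \<in> I \<and> i + s \<noteq> i0"
      proof (cases "I = {..0}")
        case True
        show ?thesis
          by (rule that[of "{..0}" "i0 - 1"]) (use True i0 in auto)
      next
        case False
        hence "I = UNIV \<or> I = {0..}" using I3 by blast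
        thus ?thesis
          by (intro that[of "{0..}" "i0 + 1"]) (use i0 in auto)
      qed
      have lf2: "leapfrog n (\<lambda>i. A (i+s)) (\<lambda>i. B (i+s)) J"
        by (rule leapfrog_shift[OF lf J]) (use JI in blast)
      have avoid: "Y \<notin> (\<lambda>i. A (i+s)) ` J \<union> (\<lambda>i. B (i+s)) ` J"
      proof
        assume "Y \<in> (\<lambda>i. A (i+s)) ` J \<union> (\<lambda>i. B (i+s)) ` J"
        then obtain i where i: "i \<in> J" "Y = A (i+s) \<or> Y = B (i+s)" by blast
        have ii: "i + s \<in> I" "i + s \<noteq> i0" using JI i(1) by blast+
        show False using i(2) i0 ii injA injB dAB unfolding inj_on_def by blast
      qed
      have "(\<lambda>i. A (i+s)) ` J \<union> (\<lambda>i. B (i+s)) ` J \<subseteq> \<X>"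
        using avoid im JI subX by blast
      thus False using noX lf2 by blast
    qed
  qed
qed

end
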